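(* Consider the multiobjective problem (MOP) $$\min_{(\bar{\mathbf z},\mathbf s)}\ \begin{pmatrix}g(\bar{\mathbf z})\\ h(\mathbf s)\end{pmatrix}\quad\text{subject to }(\bar{\mathbf z},\mathbf s)\in\mathbb S\text{ and }\exists\,(\mathbf z_1^\top,\dots,\mathbf z_{\mathcal I}^\top)^\top\in\mathbb D\text{ with }\bar{\mathbf z}=\tfrac1{\mathcal I}\textstyle\sum_{i=1}^{\mathcal I}\mathbf z_i,$$ and, for $\kappa\in[0,1]$, its weighted-sum scalarization of minimizing $\kappa g(\bar{\mathbf z})+(1-\kappa)h(\mathbf s)$ over the same feasible set. All efficient points of (MOP), except for the extremal points (those obtained from the scalarization with $\kappa\in\{0,1\}$), are properly efficient in the sense of Geoffrion.
   Context: Setting (a network of $\mathcal I\in\mathbb N$ residential energy systems with batteries). Fix an integer horizon $N\ge 2$, a time $k\in\mathbb N_0$, a step length $T>0$, and write $[m:n]=\{m,\dots,n\}$. For each $i\in[1:\mathcal I]$ the following are given: constants $\alpha_i,\beta_i,\gamma_i\in(0,1]$, a capacity $C_i\ge0$, bounds $\underline u_i<0<\bar u_i$, an initial state $x_i(k)\in[0,C_i]$, and data $w_i(n)\in\mathbb R$ for $n\in[k:k+N-1]$. Let $\mathbb U_i$ be the set of $(u^-,u^+)\in\mathbb R^2$ with $\underline u_i\le u^-\le0$, $0\le u^+\le\bar u_i$ and $0\le u^-/\underline u_i+u^+/\bar u_i\le1$. Let $\mathbb D_i\subset\mathbb R^N$ be the set of $\mathbf z_i=(z_i(k),\dots,z_i(k+N-1))^\top$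 for which there exist $(u_i^-(n),u_i^+(n))\in\mathbb U_i$, $n\in[k:k+N-1]$, with $x_i(n+1)=\alpha_i x_i(n)+T(\beta_iu_i^+(n)+u_i^-(n))\in[0,C_i]$ and $z_i(n)=w_i(n)+u_i^+(n)+\gamma_iu_i^-(n)$ for all $n\in[k:k+N-1]$; let $\mathbb D=\mathbb D_1\times\dots\times\mathbb D_{\mathcal I}$. A reference vector $\bar\zeta\in\mathbb R^N$ and tube bounds $\underline{\mathbf c},\bar{\mathbf c}\in\mathbb R^N$ are given, and $$\mathbb S=\Big\{(\bar{\mathbf z},\mathbf s)\in\mathbb R^N\times\mathbb R^{2N}_{\ge0}:\ \begin{pmatrix}I\\-I\end{pmatrix}\bar{\mathbf z}-\mathbf s\le\begin{pmatrix}\bar{\mathbf c}\\-\underline{\mathbf c}\end{pmatrix}\Big\}.$$ Objectives: $g(\bar{\mathbf z})=\frac1N\|\bar{\mathbf z}-\bar\zeta\|_2^2$, $h(\mathbf s)=\|\mathbf s\|_2^2$. For a vector problem $\min_{x\in\mathcal M}f(x)$, $f=(f_1,\dots,f_m)$: a feasible $x^\star$ is efficient if for all feasible $x$ and all $i$, $f_i(x)<f_i(x^\star)$ implies $f_j(x^\star)<f_j(x)$ for some $j$. It is properly efficient in the sense of Geoffrion if it is efficient and there exists $L>0$ such that for all $i$ and all feasible $x$ with $f_i(x)<f_i(x^\star)$ there exists $j$ with $f_j(x^\star)<f_j(x)$ and $\frac{f_i(x^\star)-f_i(x)}{f_j(x)-f_j(x^\star)}\le L$. *)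

theory Defs
  imports Complex_Main
begin

text \<open>Vectors in R^N are functions nat => real with relevant indices j < N;
  index j corresponds to time k + j. Vectors in R^(2N) use indices j < 2N.\<close>

definition Uset :: "real \<Rightarrow> real \<Rightarrow> (real \<times> real) set" where
  "Uset ulo uhi = {(um, up). ulo \<le> um \<and> um \<le> 0 \<and> 0 \<le> up \<and> up \<le> uhi
      \<and> 0 \<le> um / ulo + up / uhi \<and> um / ulo + up / uhi \<le> 1}"

text \<open>The set D_i. x j stands for x_i(k+j), um j / up j for u_i^-(k+j) / u_i^+(k+j),
  z j for z_i(k+j); w is the data indexed by absolute time.\<close>
definition Dset :: "nat \<Rightarrow> nat \<Rightarrow> real \<Rightarrow> real \<Rightarrow> real \<Rightarrow> real \<Rightarrow> real \<Rightarrow> real \<Rightarrow> real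
    \<Rightarrow> real \<Rightarrow> (nat \<Rightarrow> real) \<Rightarrow> (nat \<Rightarrow> real) set" where
  "Dset N k T alpha beta gamma C ulo uhi x0 w =
    {z. \<exists>um up x. x 0 = x0 \<and>
       (\<forall>j<N. (um j, up j) \<in> Uset ulo uhi
          \<and> x (Suc j) = alpha * x j + T * (beta * up j + um j)
          \<and> 0 \<le> x (Suc j) \<and> x (Suc j) \<le> C
          \<and> z j = w (k + j) + up j + gamma * um j)}"

definition Sset :: "nat \<Rightarrow> (nat \<Rightarrow> real) \<Rightarrow> (nat \<Rightarrow> real) \<Rightarrow> ((nat \<Rightarrow> real) \<times> (nat \<Rightarrow> real)) set" where
  "Sset N clo chi = {(zb, s). (\<forall>j<2*N. 0 \<le> s j) \<and>
      (\<forall>j<N. zb j - s j \<le> chi j \<and> - zb j - s (N + j) \<le> - clo j)}"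

definition gobj :: "nat \<Rightarrow> (nat \<Rightarrow> real) \<Rightarrow> (nat \<Rightarrow> real) \<Rightarrow> real" where
  "gobj N zeta zb = (1 / real N) * (\<Sum>j<N. (zb j - zeta j)^2)"

definition hobj :: "nat \<Rightarrow> (nat \<Rightarrow> real) \<Rightarrow> real" where
  "hobj N s = (\<Sum>j<2*N. (s j)^2)"

definition MOP_feas :: "nat \<Rightarrow> nat \<Rightarrow> nat \<Rightarrow> real
   \<Rightarrow> (nat \<Rightarrow> real) \<Rightarrow> (nat \<Rightarrow> real) \<Rightarrow> (nat \<Rightarrow> real) \<Rightarrow> (nat \<Rightarrow> real)
   \<Rightarrow> (nat \<Rightarrow> real) \<Rightarrow> (nat \<Rightarrow> real) \<Rightarrow> (nat \<Rightarrow> real) \<Rightarrow> (nat \<Rightarrow> nat \<Rightarrow> real)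
   \<Rightarrow> (nat \<Rightarrow> real) \<Rightarrow> (nat \<Rightarrow> real)
   \<Rightarrow> ((nat \<Rightarrow> real) \<times> (nat \<Rightarrow> real)) set" where
  "MOP_feas I N k T alpha beta gamma C ulo uhi x0 w clo chi =
    {(zb, s). (zb, s) \<in> Sset N clo chi \<and>
       (\<exists>zs :: nat \<Rightarrow> nat \<Rightarrow> real.
          (\<forall>i\<in>{1..I}. zs i \<in> Dset N k T (alpha i) (beta i) (gamma i) (C i) (ulo i) (uhi i) (x0 i) (w i))
        \<and> (\<forall>j<N. zb j = (1 / real I) * (\<Sum>i=1..I. zs i j)))}"

definition efficient :: "'a set \<Rightarrow> (nat \<Rightarrow> 'a \<Rightarrow> real) \<Rightarrow> nat \<Rightarrow> 'a \<Rightarrow> bool" where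
  "efficient M f m xs \<longleftrightarrow> xs \<in> M \<and>
     (\<forall>x\<in>M. \<forall>i<m. f i x < f i xs \<longrightarrow> (\<exists>j<m. f j xs < f j x))"

definition geoffrion_properly_efficient :: "'a set \<Rightarrow> (nat \<Rightarrow> 'a \<Rightarrow> real) \<Rightarrow> nat \<Rightarrow> 'a \<Rightarrow> bool" where
  "geoffrion_properly_efficient M f m xs \<longleftrightarrow> efficient M f m xs \<and>
     (\<exists>L>0. \<forall>i<m. \<forall>x\<in>M. f i x < f i xs \<longrightarrow>
        (\<exists>j<m. f j xs < f j x \<and> (f i xs - f i x) / (f j x - f j xs) \<le> L))"

definition MOP_obj :: "nat \<Rightarrow> (nat \<Rightarrow> real) \<Rightarrow> nat \<Rightarrow> ((nat \<Rightarrow> real) \<times> (nat \<Rightarrow> real)) \<Rightarrow> real" where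
  "MOP_obj N zeta i p = (if i = 0 then gobj N zeta (fst p) else hobj N (snd p))"

definition scal_min :: "((nat \<Rightarrow> real) \<times> (nat \<Rightarrow> real)) set \<Rightarrow> nat \<Rightarrow> (nat \<Rightarrow> real) \<Rightarrow> real
    \<Rightarrow> ((nat \<Rightarrow> real) \<times> (nat \<Rightarrow> real)) \<Rightarrow> bool" where
  "scal_min M N zeta kappa p \<longleftrightarrow> p \<in> M \<and>
     (\<forall>q\<in>M. kappa * gobj N zeta (fst p) + (1 - kappa) * hobj N (snd p)
            \<le> kappa * gobj N zeta (fst q) + (1 - kappa) * hobj N (snd q))"

end

theory Submission
  imports Defs
begin

lemma side:
  fixes g h :: "'a \<Rightarrow> real"
  assumes cvx: "\<And>x r t. x\<in>M \<Longrightarrow> r\<in>M \<Longrightarrow> 0\<le>t \<Longrightarrow> t\<le>1 \<Longrightarrow>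
      \<exists>y\<in>M. g y \<le> t*g x + (1-t)*g r \<and> h y \<le> t*h x + (1-t)*h r"
  and eff: "\<forall>y\<in>M. g y < g p \<longrightarrow> h p < h y"
  and r: "r \<in> M" "h r < h p" "g p < g r"
  and x: "x \<in> M" "g x < g p" "h p < h x"
  shows "(g p - g x)/(h x - h p) \<le> (g r - g p)/(h p - h r)"
proof (rule ccontr)
  define A where "A = g p - g x"
  define B where "B = h x - h p"
  define C where "C = g r - g p"
  define D where "D = h p - h r"
  have pos: "A > 0" "B > 0" "C > 0" "D > 0" using r x by (auto simp: A_def B_def C_def D_def)
  assume "\<not> ?thesis"
  hence "C/D < A/B" unfolding A_def B_def C_def D_def by simp
  hence AD: "C*B < A*D" using pos by (simp add: divide_simps mult.commute)
  define t where "t = D/(B+D)"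
  have t01: "0 \<le> t" "t \<le> 1" using pos by (auto simp: t_def divide_simps)
  have t1: "1 - t = B/(B+D)" using pos by (simp add: t_def field_simps)
  obtain y where y: "y \<in> M" "g y \<le> t*g x + (1-t)*g r" "h y \<le> t*h x + (1-t)*h r"
    using cvx[OF x(1) r(1) t01] by blast
  have "t*h x + (1-t)*h r - h p = t*B - (1-t)*D"
    by (simp add: B_def D_def algebra_simps)
  also have "\<dots> = 0" using pos by (simp add: t1 t_def field_simps)
  finally have hy: "h y \<le> h p" using y by linarith
  have "t*g x + (1-t)*g r - g p = (1-t)*C - t*A"
    by (simp add: A_def C_def algebra_simps)
  also have "\<dots> = (B*C - D*A)/(B+D)"
  proof -
    have nz: "B + D \<noteq> 0" using pos by linarith
    show ?thesis unfolding t1 unfolding t_def using nz by (simp add: diff_divide_distrib mult.commute)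
  qed
  also have "\<dots> < 0" using pos AD by (simp add: divide_simps mult.commute)
  finally have "g y < g p" using y by linarith
  with eff y(1) hy show False by force
qed

lemma abstract:
  fixes g h :: "'a \<Rightarrow> real"
  assumes cvx: "\<And>x r t. x\<in>M \<Longrightarrow> r\<in>M \<Longrightarrow> 0\<le>t \<Longrightarrow> t\<le>1 \<Longrightarrow>
      \<exists>y\<in>M. g y \<le> t*g x + (1-t)*g r \<and> h y \<le> t*h x + (1-t)*h r"
  and eff1: "\<forall>y\<in>M. g y < g p \<longrightarrow> h p < h y"
  and eff2: "\<forall>y\<in>M. h y < h p \<longrightarrow> g p < g y"
  and q: "q \<in> M" "g q < g p"
  and r: "r \<in> M" "h r < h p"
  shows "\<exists>L>0. \<forall>x\<in>M. (g x < g p \<longrightarrow> h p < h x \<and> (g p - g x)/(h x - h p) \<le> L)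
          \<and> (h x < h p \<longrightarrow> g p < g x \<and> (h p - h x)/(g x - g p) \<le> L)"
proof -
  have r3: "g p < g r" using eff2 r by blast
  have q3: "h p < h q" using eff1 q by blast
  define L where "L = max ((g r - g p)/(h p - h r)) ((h q - h p)/(g p - g q))"
  have "L > 0" using r r3 q q3 by (auto simp: L_def less_max_iff_disj)
  moreover
  have cvx': "\<And>x r t. x\<in>M \<Longrightarrow> r\<in>M \<Longrightarrow> 0\<le>t \<Longrightarrow> t\<le>1 \<Longrightarrow>
      \<exists>y\<in>M. h y \<le> t*h x + (1-t)*h r \<and> g y \<le> t*g x + (1-t)*g r"
    using cvx by blast
  have "\<forall>x\<in>M. (g x < g p \<longrightarrow> h p < h x \<and> (g p - g x)/(h x - h p) \<le> L)
          \<and> (h x < h p \<longrightarrow> g p < g x \<and> (h p - h x)/(g x - g p) \<le> L)"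
  proof (intro ballI conjI impI)
    fix x assume x: "x \<in> M"
    { assume gx: "g x < g p"
      show hx: "h p < h x" using eff1 x gx by blast
      have "(g p - g x)/(h x - h p) \<le> (g r - g p)/(h p - h r)"
        using side[OF cvx eff1 r(1) r(2) r3 x gx hx] by blast
      thus "(g p - g x)/(h x - h p) \<le> L" unfolding L_def by linarith }
    { assume hx: "h x < h p"
      show gx: "g p < g x" using eff2 x hx by blast
      have "(h p - h x)/(g x - g p) \<le> (h q - h p)/(g p - g q)"
        using side[of M h g, OF cvx' eff2 q(1) q(2) q3 x hx gx] by blast
      thus "(h p - h x)/(g x - g p) \<le> L" unfolding L_def by linarith }
  qed
  ultimately show ?thesis by blast
qed

lemma cvx_bounds:
  fixes t ua ub lo hi :: real
  assumes "0 \<le> t" "t \<le> 1" "lo \<le> ua" "ua \<le> hi" "lo \<le> ub" "ub \<le> hi"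
  shows "lo \<le> t*ua + (1-t)*ub \<and> t*ua + (1-t)*ub \<le> hi"
proof -
  have "t*lo \<le> t*ua" "(1-t)*lo \<le> (1-t)*ub" "t*ua \<le> t*hi" "(1-t)*ub \<le> (1-t)*hi"
    using assms by (auto intro: mult_left_mono)
  thus ?thesis by (simp add: algebra_simps)
qed

lemma cvx_le:
  fixes t u1 u2 c :: real
  assumes "0 \<le> t" "t \<le> 1" "u1 \<le> c" "u2 \<le> c"
  shows "t*u1 + (1-t)*u2 \<le> c"
  using cvx_bounds[OF assms(1,2), where lo="min u1 u2" and hi=c and ua=u1 and ub=u2] assms by auto

lemma Uset_convex:
  assumes "(a1,b1) \<in> Uset lo hi" "(a2,b2) \<in> Uset lo hi" "0 \<le> t" "t \<le> 1"
  shows "(t*a1+(1-t)*a2, t*b1+(1-t)*b2) \<in> Uset lo hi"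
proof -
  have e: "(t*a1+(1-t)*a2)/lo + (t*b1+(1-t)*b2)/hi = t*(a1/lo+b1/hi) + (1-t)*(a2/lo+b2/hi)"
    unfolding divide_inverse by (simp add: algebra_simps)
  show ?thesis using assms cvx_bounds[OF assms(3,4)]
    unfolding Uset_def by (simp only: e mem_Collect_eq case_prod_conv) (meson cvx_bounds)
qed

lemma Dset_convex:
  assumes "z1 \<in> Dset N k T alpha beta gamma C ulo uhi x0 w"
    "z2 \<in> Dset N k T alpha beta gamma C ulo uhi x0 w" "0 \<le> t" "t \<le> 1"
  shows "(\<lambda>j. t * z1 j + (1-t) * z2 j) \<in> Dset N k T alpha beta gamma C ulo uhi x0 w"
proof -
  obtain um1 up1 x1 where h1: "x1 0 = x0" "\<forall>j<N. (um1 j, up1 j) \<in> Uset ulo uhi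
          \<and> x1 (Suc j) = alpha * x1 j + T * (beta * up1 j + um1 j)
          \<and> 0 \<le> x1 (Suc j) \<and> x1 (Suc j) \<le> C
          \<and> z1 j = w (k + j) + up1 j + gamma * um1 j"
    using assms(1) unfolding Dset_def by blast
  obtain um2 up2 x2 where h2: "x2 0 = x0" "\<forall>j<N. (um2 j, up2 j) \<in> Uset ulo uhi
          \<and> x2 (Suc j) = alpha * x2 j + T * (beta * up2 j + um2 j)
          \<and> 0 \<le> x2 (Suc j) \<and> x2 (Suc j) \<le> C
          \<and> z2 j = w (k + j) + up2 j + gamma * um2 j"
    using assms(2) unfolding Dset_def by blast
  define um where "um = (\<lambda>j. t*um1 j + (1-t)*um2 j)"
  define up where "up = (\<lambda>j. t*up1 j + (1-t)*up2 j)"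
  define x where "x = (\<lambda>j. t*x1 j + (1-t)*x2 j)"
  have "x 0 = x0" using h1 h2 by (simp add: x_def algebra_simps)
  moreover have "\<forall>j<N. (um j, up j) \<in> Uset ulo uhi
          \<and> x (Suc j) = alpha * x j + T * (beta * up j + um j)
          \<and> 0 \<le> x (Suc j) \<and> x (Suc j) \<le> C
          \<and> t * z1 j + (1-t) * z2 j = w (k + j) + up j + gamma * um j"
  proof (intro allI impI conjI)
    fix j assume j: "j < N"
    note a = h1(2)[rule_format, OF j] and b = h2(2)[rule_format, OF j]
    show "(um j, up j) \<in> Uset ulo uhi" unfolding um_def up_def
      using Uset_convex a b assms(3,4) by blast
    show "x (Suc j) = alpha * x j + T * (beta * up j + um j)"
      unfolding x_def up_def um_def using a b by (simp add: algebra_simps)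
    show "0 \<le> x (Suc j)" "x (Suc j) \<le> C"
      unfolding x_def using a b cvx_bounds[OF assms(3,4), where lo=0 and ua="x1 (Suc j)" and hi=C and ub="x2 (Suc j)"] by auto
    show "t * z1 j + (1-t) * z2 j = w (k + j) + up j + gamma * um j"
      unfolding up_def um_def using a b by (simp add: algebra_simps)
  qed
  ultimately show ?thesis unfolding Dset_def by blast
qed

lemma sq_convex:
  fixes t a b c :: real
  assumes "0 \<le> t" "t \<le> 1"
  shows "(t*a + (1-t)*b - c)^2 \<le> t*(a-c)^2 + (1-t)*(b-c)^2"
proof -
  have "t*(a-c)^2 + (1-t)*(b-c)^2 - (t*a + (1-t)*b - c)^2 = t*(1-t)*(a-b)^2"
    by (simp add: power2_eq_square algebra_simps)
  moreover have "t*(1-t)*(a-b)^2 \<ge> 0" using assms by simp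
  ultimately show ?thesis by linarith
qed

lemma feas_convex:
  assumes "P1 \<in> MOP_feas I N k T alpha beta gamma C ulo uhi x0 w clo chi"
    "P2 \<in> MOP_feas I N k T alpha beta gamma C ulo uhi x0 w clo chi" "0 \<le> t" "t \<le> 1"
  shows "\<exists>y\<in>MOP_feas I N k T alpha beta gamma C ulo uhi x0 w clo chi.
     gobj N zeta (fst y) \<le> t * gobj N zeta (fst P1) + (1-t) * gobj N zeta (fst P2) \<and>
     hobj N (snd y) \<le> t * hobj N (snd P1) + (1-t) * hobj N (snd P2)"
proof -
  obtain zb1 s1 where P1: "P1 = (zb1, s1)" by (cases P1)
  obtain zb2 s2 where P2: "P2 = (zb2, s2)" by (cases P2)
  have S1: "(zb1,s1) \<in> Sset N clo chi" and S2: "(zb2,s2) \<in> Sset N clo chi"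
    using assms P1 P2 unfolding MOP_feas_def by auto
  obtain zs1 where z1: "\<forall>i\<in>{1..I}. zs1 i \<in> Dset N k T (alpha i) (beta i) (gamma i) (C i) (ulo i) (uhi i) (x0 i) (w i)"
     "\<forall>j<N. zb1 j = (1 / real I) * (\<Sum>i=1..I. zs1 i j)"
    using assms(1) P1 unfolding MOP_feas_def by auto
  obtain zs2 where z2: "\<forall>i\<in>{1..I}. zs2 i \<in> Dset N k T (alpha i) (beta i) (gamma i) (C i) (ulo i) (uhi i) (x0 i) (w i)"
     "\<forall>j<N. zb2 j = (1 / real I) * (\<Sum>i=1..I. zs2 i j)"
    using assms(2) P2 unfolding MOP_feas_def by auto
  define zb where "zb = (\<lambda>j. t*zb1 j + (1-t)*zb2 j)"
  define s where "s = (\<lambda>j. t*s1 j + (1-t)*s2 j)"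
  define zs where "zs = (\<lambda>i j. t*zs1 i j + (1-t)*zs2 i j)"
  have "(zb, s) \<in> Sset N clo chi"
  proof -
    have "\<forall>j<2*N. 0 \<le> s j" using S1 S2 assms(3,4) unfolding Sset_def s_def by auto
    moreover have "\<forall>j<N. zb j - s j \<le> chi j \<and> - zb j - s (N + j) \<le> - clo j"
    proof (intro allI impI conjI)
      fix j assume j: "j < N"
      have a: "zb1 j - s1 j \<le> chi j" "- zb1 j - s1 (N + j) \<le> - clo j" using S1 j unfolding Sset_def by auto
      have b: "zb2 j - s2 j \<le> chi j" "- zb2 j - s2 (N + j) \<le> - clo j" using S2 j unfolding Sset_def by auto
      have "zb j - s j = t*(zb1 j - s1 j) + (1-t)*(zb2 j - s2 j)" by (simp add: zb_def s_def algebra_simps)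
      also have "\<dots> \<le> chi j" using cvx_le[OF assms(3,4), of "zb1 j - s1 j" "chi j" "zb2 j - s2 j"] a b by auto
      finally show "zb j - s j \<le> chi j" .
      have "- zb j - s (N+j) = t*(- zb1 j - s1 (N+j)) + (1-t)*(- zb2 j - s2 (N+j))" by (simp add: zb_def s_def algebra_simps)
      also have "\<dots> \<le> - clo j" using cvx_le[OF assms(3,4), of "- zb1 j - s1 (N+j)" "- clo j" "- zb2 j - s2 (N+j)"] a b by auto
      finally show "- zb j - s (N+j) \<le> - clo j" .
    qed
    ultimately show ?thesis unfolding Sset_def by simp
  qed
  moreover have "\<forall>i\<in>{1..I}. zs i \<in> Dset N k T (alpha i) (beta i) (gamma i) (C i) (ulo i) (uhi i) (x0 i) (w i)"
    using z1(1) z2(1) Dset_convex[OF _ _ assms(3,4)] unfolding zs_def by blast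
  moreover have "\<forall>j<N. zb j = (1 / real I) * (\<Sum>i=1..I. zs i j)"
  proof (intro allI impI)
    fix j assume j: "j < N"
    have E: "(\<Sum>i=1..I. zs i j) = t*(\<Sum>i=1..I. zs1 i j) + (1-t)*(\<Sum>i=1..I. zs2 i j)"
      by (simp add: zs_def sum.distrib sum_distrib_left)
    show "zb j = (1 / real I) * (\<Sum>i=1..I. zs i j)"
      unfolding zb_def E using z1(2)[rule_format, OF j] z2(2)[rule_format, OF j] by (simp add: divide_inverse algebra_simps)
  qed
  ultimately have mem: "(zb, s) \<in> MOP_feas I N k T alpha beta gamma C ulo uhi x0 w clo chi"
    unfolding MOP_feas_def by blast
  have g: "gobj N zeta zb \<le> t * gobj N zeta zb1 + (1-t) * gobj N zeta zb2"
  proof -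
    have "(\<Sum>j<N. (zb j - zeta j)^2) \<le> (\<Sum>j<N. t*(zb1 j - zeta j)^2 + (1-t)*(zb2 j - zeta j)^2)"
      unfolding zb_def by (rule sum_mono) (rule sq_convex[OF assms(3,4)])
    also have "\<dots> = t*(\<Sum>j<N. (zb1 j - zeta j)^2) + (1-t)*(\<Sum>j<N. (zb2 j - zeta j)^2)"
      by (simp add: sum.distrib sum_distrib_left)
    finally have "(1 / real N) * (\<Sum>j<N. (zb j - zeta j)^2) \<le> (1 / real N) * (t*(\<Sum>j<N. (zb1 j - zeta j)^2) + (1-t)*(\<Sum>j<N. (zb2 j - zeta j)^2))"
      by (rule mult_left_mono) simp
    thus ?thesis unfolding gobj_def by (simp add: diff_divide_distrib algebra_simps)
  qed
  have h: "hobj N s \<le> t * hobj N s1 + (1-t) * hobj N s2"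
  proof -
    have "(\<Sum>j<2*N. (s j)^2) \<le> (\<Sum>j<2*N. t*(s1 j - 0)^2 + (1-t)*(s2 j - 0)^2)"
      unfolding s_def using sq_convex[OF assms(3,4), where c=0] by (intro sum_mono) simp
    also have "\<dots> = t*(\<Sum>j<2*N. (s1 j)^2) + (1-t)*(\<Sum>j<2*N. (s2 j)^2)"
      by (simp add: sum.distrib sum_distrib_left)
    finally show ?thesis unfolding hobj_def .
  qed
  show ?thesis using mem g h P1 P2 by (intro bexI[of _ "(zb, s)"]) auto
qed


theorem corollary3:
  fixes I N k :: nat and T :: real
    and alpha beta gamma C ulo uhi x0 :: "nat \<Rightarrow> real"
    and w :: "nat \<Rightarrow> nat \<Rightarrow> real"
    and zeta clo chi :: "nat \<Rightarrow> real"
    and p :: "(nat \<Rightarrow> real) \<times> (nat \<Rightarrow> real)"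
  assumes "I \<ge> 1" and "N \<ge> 2" and "T > 0"
    and "\<forall>i\<in>{1..I}. 0 < alpha i \<and> alpha i \<le> 1"
    and "\<forall>i\<in>{1..I}. 0 < beta i \<and> beta i \<le> 1"
    and "\<forall>i\<in>{1..I}. 0 < gamma i \<and> gamma i \<le> 1"
    and "\<forall>i\<in>{1..I}. C i \<ge> 0"
    and "\<forall>i\<in>{1..I}. ulo i < 0 \<and> 0 < uhi i"
    and "\<forall>i\<in>{1..I}. 0 \<le> x0 i \<and> x0 i \<le> C i"
    and eff: "efficient (MOP_feas I N k T alpha beta gamma C ulo uhi x0 w clo chi)
                (MOP_obj N zeta) 2 p"
    and not0: "\<not> scal_min (MOP_feas I N k T alpha beta gamma C ulo uhi x0 w clo chi) N zeta 0 p"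
    and not1: "\<not> scal_min (MOP_feas I N k T alpha beta gamma C ulo uhi x0 w clo chi) N zeta 1 p"
  shows "geoffrion_properly_efficient (MOP_feas I N k T alpha beta gamma C ulo uhi x0 w clo chi)
           (MOP_obj N zeta) 2 p"
proof -
  let ?M = "MOP_feas I N k T alpha beta gamma C ulo uhi x0 w clo chi"
  let ?g = "\<lambda>q. gobj N zeta (fst q)"
  let ?h = "\<lambda>q. hobj N (snd q)"
  have f0: "MOP_obj N zeta 0 = ?g" and f1: "MOP_obj N zeta 1 = ?h"
    by (auto simp: MOP_obj_def fun_eq_iff)
  have pM: "p \<in> ?M" using eff unfolding efficient_def by blast
  have effall: "\<forall>x\<in>?M. \<forall>i<2. MOP_obj N zeta i x < MOP_obj N zeta i p \<longrightarrow>
      (\<exists>j<2. MOP_obj N zeta j p < MOP_obj N zeta j x)"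
    using eff unfolding efficient_def by blast
  have two: "\<And>P. (\<exists>j<(2::nat). P j) \<longleftrightarrow> P 0 \<or> P 1"
    by (metis less_2_cases nat_1_add_1 less_add_one pos2 One_nat_def)
  have two': "\<And>P. (\<forall>j<(2::nat). P j) \<longleftrightarrow> P 0 \<and> P 1"
    using two[of "\<lambda>j. \<not> P j" for P] by blast
  have eff1: "\<forall>y\<in>?M. ?g y < ?g p \<longrightarrow> ?h p < ?h y"
  proof (intro ballI impI)
    fix y assume "y \<in> ?M" "?g y < ?g p"
    with effall have "\<exists>j<2. MOP_obj N zeta j p < MOP_obj N zeta j y"
      using f0 by (metis pos2)
    thus "?h p < ?h y" using \<open>?g y < ?g p\<close> unfolding two f0 f1 by auto
  qed
  have eff2: "\<forall>y\<in>?M. ?h y < ?h p \<longrightarrow> ?g p < ?g y"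
  proof (intro ballI impI)
    fix y assume "y \<in> ?M" "?h y < ?h p"
    with effall have "\<exists>j<2. MOP_obj N zeta j p < MOP_obj N zeta j y"
      using f1 by (metis one_less_numeral_iff semiring_norm(76))
    thus "?g p < ?g y" using \<open>?h y < ?h p\<close> unfolding two f0 f1 by auto
  qed
  obtain q where q: "q \<in> ?M" "?g q < ?g p"
    using not1 pM unfolding scal_min_def by force
  obtain r where r: "r \<in> ?M" "?h r < ?h p"
    using not0 pM unfolding scal_min_def by force
  have cvx: "\<And>x r t. x\<in>?M \<Longrightarrow> r\<in>?M \<Longrightarrow> 0\<le>t \<Longrightarrow> t\<le>1 \<Longrightarrow>
      \<exists>y\<in>?M. ?g y \<le> t*?g x + (1-t)*?g r \<and> ?h y \<le> t*?h x + (1-t)*?h r"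
    by (rule feas_convex)
  obtain L where L: "L > 0" "\<forall>x\<in>?M. (?g x < ?g p \<longrightarrow> ?h p < ?h x \<and> (?g p - ?g x)/(?h x - ?h p) \<le> L)
          \<and> (?h x < ?h p \<longrightarrow> ?g p < ?g x \<and> (?h p - ?h x)/(?g x - ?g p) \<le> L)"
    using abstract[of ?M ?g ?h p q r, OF cvx eff1 eff2 q r] by blast
  show ?thesis
    unfolding geoffrion_properly_efficient_def
  proof (intro conjI exI[of _ L])
    show "efficient ?M (MOP_obj N zeta) 2 p" by (rule eff)
    show "0 < L" by (rule L(1))
    show "\<forall>i<2. \<forall>x\<in>?M. MOP_obj N zeta i x < MOP_obj N zeta i p \<longrightarrow>
        (\<exists>j<2. MOP_obj N zeta j p < MOP_obj N zeta j x \<and>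
           (MOP_obj N zeta i p - MOP_obj N zeta i x) / (MOP_obj N zeta j x - MOP_obj N zeta j p) \<le> L)"
      unfolding two two' f0 f1 using L(2) by blast
  qed
qed

end
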